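(* Let $q$ be a positive multiple of $24$, $w_A,w_B:\mathbb{Z}/q\mathbb{Z}\to[0,1]$, and $a,b:\mathbb{Z}/24\mathbb{Z}\to[0,1]$ given by $a(k):=\frac{24}{q}\sum_{x\equiv k\ (\mathrm{mod}\ 24)}w_A(x)$, $b(k):=\frac{24}{q}\sum_{x\equiv k\ (\mathrm{mod}\ 24)}w_B(x)$. Then $$\frac{24}{q}\sum_{t\in\mathbb{Z}/q\mathbb{Z}}(w_A*w_B)(t)f_q(t)\ \ge\ \sum_{t\in\mathbb{Z}/24\mathbb{Z}}(a*b)(t)f_{24}(t)-\frac1{\sqrt5}\sqrt{\sum_{k}\big(a(k)-a(k)^2\big)}\sqrt{\sum_{k}\big(b(k)-b(k)^2\big)}.$$
   Context: For $f,g:\mathbb{Z}/n\mathbb{Z}\to\mathbb{C}$: convolution $(f*g)(x):=\frac1n\sum_{y\in\mathbb{Z}/n\mathbb{Z}}f(y)g(x-y)$, and $f_n(t):=\#\{x\in\mathbb{Z}/n\mathbb{Z}:x^2=t\}$. Sums over $k$ range over $\mathbb{Z}/24\mathbb{Z}$. *)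

theory Defs
  imports "HOL-Analysis.Analysis"
begin

text \<open>Z/nZ is represented by the residues {0..<n} of type nat; functions
  Z/nZ -> C (here real suffices) are functions nat => real, only their values
  on {0..<n} matter.\<close>

definition zconv :: "nat \<Rightarrow> (nat \<Rightarrow> real) \<Rightarrow> (nat \<Rightarrow> real) \<Rightarrow> nat \<Rightarrow> real" where
  "zconv n f g x = (1 / real n) * (\<Sum>y<n. f y * g ((x + n - y) mod n))"

definition sqcount :: "nat \<Rightarrow> nat \<Rightarrow> nat" where
  "sqcount n t = card {x \<in> {..<n}. (x * x) mod n = t mod n}"

definition class_avg :: "nat \<Rightarrow> (nat \<Rightarrow> real) \<Rightarrow> nat \<Rightarrow> real" where
  "class_avg q w k = (24 / real q) * (\<Sum>x \<in> {x. x < q \<and> x mod 24 = k}. w x)"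

end

theory Submission
  imports Defs "HOL-Library.Real_Mod"
begin


definition ee :: "nat \<Rightarrow> int \<Rightarrow> complex" where
  "ee n k = cis (2 * pi * of_int k / of_nat n)"

lemma ee_add: "ee n (a + b) = ee n a * ee n b"
  unfolding ee_def by (simp add: cis_mult add_divide_distrib distrib_left)

lemma ee_pow: "ee n k ^ j = ee n (int j * k)"
  unfolding ee_def Complex.DeMoivre by (simp add: field_simps)

lemma ee_cnj: "cnj (ee n k) = ee n (- k)"
  unfolding ee_def by (simp add: cis_cnj)

lemma norm_ee [simp]: "norm (ee n k) = 1"
  unfolding ee_def by simp

lemma ee_dvd: assumes "n > 0" "int n dvd k" shows "ee n k = 1"
proof -
  obtain j where "k = int n * j" using assms by blast
  then have "2 * pi * of_int k / of_nat n = 2 * pi * of_int j" using assms by simp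
  then show ?thesis unfolding ee_def by simp
qed

lemma ee_one_iff: assumes "n > 0" shows "ee n k = 1 \<longleftrightarrow> int n dvd k"
proof
  assume "ee n k = 1"
  then obtain j where j: "2 * pi * of_int k / of_nat n = of_int j * (2 * pi)"
    unfolding ee_def cis_eq_1_iff by blast
  then have "of_int k = of_int j * (real n)" using assms by (simp add: field_simps)
  then have "k = j * int n" by (metis of_int_eq_iff of_int_mult of_int_of_nat_eq)
  then show "int n dvd k" by simp
qed (use ee_dvd assms in auto)

lemma ee_cong: assumes "n > 0" "int n dvd (a - b)" shows "ee n a = ee n b"
proof -
  have "ee n a = ee n (a - b) * ee n b" by (simp flip: ee_add)
  then show ?thesis using ee_dvd[OF assms] by simp
qed

lemma ee_orth: assumes "n > 0"
  shows "(\<Sum>x<n. ee n (int x * k)) = (if int n dvd k then of_nat n else 0)"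
proof -
  have "(\<Sum>x<n. ee n (int x * k)) = (\<Sum>x<n. ee n k ^ x)" by (simp add: ee_pow)
  also have "\<dots> = (if int n dvd k then of_nat n else 0)"
    unfolding sum_gp_strict using assms by (auto simp: ee_one_iff ee_pow ee_dvd)
  finally show ?thesis .
qed


definition FT :: "nat \<Rightarrow> nat set \<Rightarrow> (nat \<Rightarrow> real) \<Rightarrow> nat \<Rightarrow> complex" where
  "FT n Y u \<xi> = (\<Sum>y\<in>Y. of_real (u y) * ee n (int \<xi> * int y))"

definition CC :: "nat \<Rightarrow> nat \<Rightarrow> complex" where
  "CC n \<xi> = (\<Sum>s<n. ee n (- (int \<xi> * int (s * s))))"

lemma nat_mod_eq_iff_dvd: "(a mod n = b mod n) \<longleftrightarrow> int n dvd (int b - int a)"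
proof -
  have "(a mod n = b mod n) \<longleftrightarrow> int a mod int n = int b mod int n"
    by (metis of_nat_eq_iff of_nat_mod)
  also have "\<dots> \<longleftrightarrow> int n dvd (int b - int a)"
    by (metis dvd_minus_iff minus_diff_eq mod_eq_dvd_iff)
  finally show ?thesis .
qed

lemma sq_expand: assumes "n > 0"
  shows "(of_nat (sqcount n t) :: complex) = (1 / of_nat n) * (\<Sum>\<xi><n. ee n (int \<xi> * int t) * CC n \<xi>)"
proof -
  have "(of_nat (sqcount n t) :: complex) = (\<Sum>s\<in>{x \<in> {..<n}. (x * x) mod n = t mod n}. 1)"
    unfolding sqcount_def by simp
  also have "\<dots> = (\<Sum>s<n. if int n dvd (int t - int (s * s)) then 1 else 0)"
    by (subst sum.inter_filter) (auto simp: nat_mod_eq_iff_dvd)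
  also have "\<dots> = (\<Sum>s<n. (1 / of_nat n) * (\<Sum>\<xi><n. ee n (int \<xi> * (int t - int (s * s)))))"
    using assms by (intro sum.cong) (auto simp: ee_orth)
  also have "\<dots> = (1 / of_nat n) * (\<Sum>s<n. \<Sum>\<xi><n. ee n (int \<xi> * int t) * ee n (- (int \<xi> * int (s * s))))"
    by (simp add: sum_distrib_left right_diff_distrib flip: ee_add)
  also have "\<dots> = (1 / of_nat n) * (\<Sum>\<xi><n. ee n (int \<xi> * int t) * CC n \<xi>)"
    unfolding CC_def by (subst sum.swap) (simp add: sum_distrib_left)
  finally show ?thesis .
qed

lemma swap3: "(\<Sum>x\<in>A. \<Sum>y\<in>B. \<Sum>z\<in>C. g x y z) = (\<Sum>y\<in>B. \<Sum>z\<in>C. \<Sum>x\<in>A. g x y z)"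
proof -
  have "(\<Sum>x\<in>A. \<Sum>y\<in>B. \<Sum>z\<in>C. g x y z) = (\<Sum>y\<in>B. \<Sum>x\<in>A. \<Sum>z\<in>C. g x y z)"
    by (rule sum.swap)
  also have "\<dots> = (\<Sum>y\<in>B. \<Sum>z\<in>C. \<Sum>x\<in>A. g x y z)"
    by (intro sum.cong refl sum.swap)
  finally show ?thesis .
qed

lemma BF: assumes "n > 0" "finite Y"
  shows "complex_of_real (\<Sum>y\<in>Y. \<Sum>z\<in>Y. u y * v z * real (sqcount n (y + z)))
     = (1 / of_nat n) * (\<Sum>\<xi><n. FT n Y u \<xi> * FT n Y v \<xi> * CC n \<xi>)"
proof -
  have "complex_of_real (\<Sum>y\<in>Y. \<Sum>z\<in>Y. u y * v z * real (sqcount n (y + z)))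
      = (\<Sum>y\<in>Y. \<Sum>z\<in>Y. of_real (u y) * of_real (v z) * of_nat (sqcount n (y + z)))"
    by simp
  also have "\<dots> = (\<Sum>y\<in>Y. \<Sum>z\<in>Y. of_real (u y) * of_real (v z) * ((1 / of_nat n) * (\<Sum>\<xi><n. ee n (int \<xi> * int y) * ee n (int \<xi> * int z) * CC n \<xi>)))"
    using assms(1) by (simp add: sq_expand distrib_left flip: ee_add)
  also have "\<dots> = (1 / of_nat n) * (\<Sum>\<xi><n. \<Sum>y\<in>Y. \<Sum>z\<in>Y. (of_real (u y) * ee n (int \<xi> * int y)) * (of_real (v z) * ee n (int \<xi> * int z)) * CC n \<xi>)"
  proof -
    have "(\<Sum>y\<in>Y. \<Sum>z\<in>Y. of_real (u y) * of_real (v z) * ((1 / of_nat n) * (\<Sum>\<xi><n. ee n (int \<xi> * int y) * ee n (int \<xi> * int z) * CC n \<xi>)))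
       = (\<Sum>y\<in>Y. \<Sum>z\<in>Y. \<Sum>\<xi><n. (1 / of_nat n) * ((of_real (u y) * ee n (int \<xi> * int y)) * (of_real (v z) * ee n (int \<xi> * int z)) * CC n \<xi>))"
      by (intro sum.cong refl) (simp add: sum_distrib_left algebra_simps)
    also have "\<dots> = (\<Sum>\<xi><n. \<Sum>y\<in>Y. \<Sum>z\<in>Y. (1 / of_nat n) * ((of_real (u y) * ee n (int \<xi> * int y)) * (of_real (v z) * ee n (int \<xi> * int z)) * CC n \<xi>))"
      by (rule swap3[symmetric])
    finally show ?thesis by (simp only: sum_distrib_left)
  qed
  also have "\<dots> = (1 / of_nat n) * (\<Sum>\<xi><n. FT n Y u \<xi> * FT n Y v \<xi> * CC n \<xi>)"
    unfolding FT_def by (intro arg_cong[where f="\<lambda>x. 1 / of_nat n * x"] sum.cong refl) (simp add: sum_distrib_left sum_distrib_right mult.assoc, rule sum.swap)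
  finally show ?thesis .
qed


lemma cnj_FT: "cnj (FT n Y u \<xi>) = (\<Sum>y\<in>Y. of_real (u y) * ee n (- (int \<xi> * int y)))"
  unfolding FT_def by (simp add: ee_cnj)

lemma parseval: assumes "n > 0"
  shows "(\<Sum>\<xi><n. (cmod (FT n {..<n} u \<xi>))^2) = real n * (\<Sum>y<n. (u y)^2)"
proof -
  have "complex_of_real (\<Sum>\<xi><n. (cmod (FT n {..<n} u \<xi>))^2) = (\<Sum>\<xi><n. FT n {..<n} u \<xi> * cnj (FT n {..<n} u \<xi>))"
    by (simp only: of_real_sum complex_norm_square)
  also have "\<dots> = (\<Sum>\<xi><n. \<Sum>y<n. \<Sum>z<n. of_real (u y) * of_real (u z) * ee n (int \<xi> * (int y - int z)))"
    unfolding cnj_FT unfolding FT_def sum_product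
  proof (intro sum.cong refl)
    fix \<xi> y z
    have "ee n (int \<xi> * (int y - int z)) = ee n (int \<xi> * int y) * ee n (- (int \<xi> * int z))"
      by (simp add: right_diff_distrib flip: ee_add)
    then show "of_real (u y) * ee n (int \<xi> * int y) * (of_real (u z) * ee n (- (int \<xi> * int z))) = of_real (u y) * of_real (u z) * ee n (int \<xi> * (int y - int z))"
      by (simp add: mult_ac)
  qed
  also have "\<dots> = (\<Sum>y<n. \<Sum>z<n. of_real (u y) * of_real (u z) * (\<Sum>\<xi><n. ee n (int \<xi> * (int y - int z))))"
    unfolding sum_distrib_left by (rule swap3)
  also have "\<dots> = (\<Sum>y<n. \<Sum>z<n. if z = y then of_real (u y) * of_real (u z) * of_nat n else 0)"
  proof (intro sum.cong refl)
    fix y z assume "y \<in> {..<n}" "z \<in> {..<n}"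
    then have "int n dvd (int y - int z) \<longleftrightarrow> z = y"
      by (simp flip: nat_mod_eq_iff_dvd)
    then show "of_real (u y) * of_real (u z) * (\<Sum>\<xi><n. ee n (int \<xi> * (int y - int z))) = (if z = y then of_real (u y) * of_real (u z) * of_nat n else 0)"
      using assms by (simp add: ee_orth)
  qed
  also have "\<dots> = complex_of_real (real n * (\<Sum>y<n. (u y)^2))"
    by (simp add: sum_distrib_left power2_eq_square mult_ac)
  finally show ?thesis by (simp only: of_real_eq_iff)
qed



lemma card_bound: fixes n \<xi> :: nat
  assumes "n > 0" "\<not> n dvd 24 * \<xi>"
  shows "5 * card {h\<in>{..<n}. n dvd 2 * \<xi> * h} \<le> n"
proof -
  define g where "g = gcd n (2 * \<xi>)"
  define r where "r = n div g"
  define d where "d = 2 * \<xi> div g"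
  have gpos: "g > 0" using assms g_def by simp
  have ng: "n = r * g" unfolding r_def g_def by simp
  have rpos: "r > 0" using ng assms by (cases r) auto
  have cop: "coprime r d"
    unfolding r_def g_def d_def using assms by (metis div_gcd_coprime gcd_eq_0_iff not_gr0)
  have g2: "2 * \<xi> = d * g" unfolding g_def d_def by simp
  have sub: "{h\<in>{..<n}. n dvd 2 * \<xi> * h} \<subseteq> (\<lambda>j. r * j) ` {..<g}"
  proof
    fix h assume h: "h \<in> {h\<in>{..<n}. n dvd 2 * \<xi> * h}"
    have e: "2 * \<xi> * h = (d * h) * g" using g2 by (metis mult.assoc mult.commute)
    have "n dvd 2 * \<xi> * h" using h by simp
    then have "r * g dvd (d * h) * g" using e ng by simp
    then have "r dvd d * h" using gpos by simp
    then have "r dvd h" using cop by (simp add: coprime_dvd_mult_right_iff)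
    then obtain j where j: "h = r * j" by blast
    have "j < g" using h j ng rpos by auto
    then show "h \<in> (\<lambda>j. r * j) ` {..<g}" using j by blast
  qed
  have cardle: "card {h\<in>{..<n}. n dvd 2 * \<xi> * h} \<le> g"
  proof -
    have "card {h\<in>{..<n}. n dvd 2 * \<xi> * h} \<le> card ((\<lambda>j. r * j) ` {..<g})"
      by (rule card_mono[OF _ sub]) simp
    also have "\<dots> \<le> g" using card_image_le[of "{..<g}" "\<lambda>j. r * j"] by simp
    finally show ?thesis .
  qed
  have "r \<ge> 5"
  proof (rule ccontr)
    assume "\<not> r \<ge> 5"
    then have "r \<in> {1,2,3,4}" using rpos by auto
    then have "r dvd 12" by auto
    then obtain c where c: "12 = r * c" by blast
    have "24 * \<xi> = (2 * \<xi>) * 12" by simp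
    also have "\<dots> = n * (d * c)" unfolding g2 c ng by (simp add: mult_ac)
    finally show False using assms by (metis dvd_triv_left)
  qed
  then have "5 * g \<le> r * g" by simp
  then show ?thesis using cardle ng by linarith
qed



lemma reindex_shift: fixes n t :: nat and g :: "nat \<Rightarrow> 'a::comm_monoid_add" assumes "n > 0"
  shows "(\<Sum>s<n. g s) = (\<Sum>h<n. g ((t + h) mod n))"
proof -
  have inj: "inj_on (\<lambda>h. (t + h) mod n) {..<n}"
  proof
    fix x y assume "x \<in> {..<n}" "y \<in> {..<n}" "(t + x) mod n = (t + y) mod n"
    then have "int n dvd int y - int x" by (simp add: nat_mod_eq_iff_dvd)
    then have "x mod n = y mod n" by (simp add: nat_mod_eq_iff_dvd)
    then show "x = y" using \<open>x \<in> {..<n}\<close> \<open>y \<in> {..<n}\<close> by simp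
  qed
  have im: "(\<lambda>h. (t + h) mod n) ` {..<n} = {..<n}"
    by (rule endo_inj_surj[OF _ _ inj]) (use assms in auto)
  have "(\<Sum>s<n. g s) = (\<Sum>s\<in>(\<lambda>h. (t + h) mod n) ` {..<n}. g s)" using im by simp
  also have "\<dots> = (\<Sum>h<n. g ((t + h) mod n))" by (rule sum.reindex[OF inj, unfolded comp_def])
  finally show ?thesis .
qed

lemma sq_mod_dvd: "int n dvd (int a * int a - int (a mod n) * int (a mod n))"
proof -
  have "int a = int n * int (a div n) + int (a mod n)"
    by (metis div_mult_mod_eq of_nat_add of_nat_mult mult.commute)
  then have "int a * int a - int (a mod n) * int (a mod n) = int n * (int (a div n) * (int a + int (a mod n)))"
    by (simp add: algebra_simps)
  then show ?thesis by simp
qed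

lemma gauss: assumes "n > 0" "\<not> n dvd 24 * \<xi>"
  shows "(cmod (CC n \<xi>))^2 \<le> real n ^ 2 / 5"
proof -
  have cnjC: "cnj (CC n \<xi>) = (\<Sum>t<n. ee n (int \<xi> * int (t * t)))"
    unfolding CC_def by (simp add: ee_cnj)
  have "complex_of_real ((cmod (CC n \<xi>))^2) = CC n \<xi> * cnj (CC n \<xi>)"
    by (simp only: complex_norm_square)
  also have "\<dots> = (\<Sum>t<n. \<Sum>s<n. ee n (int \<xi> * (int t * int t - int s * int s)))"
    unfolding cnjC unfolding CC_def sum_product
    apply (rule trans[OF sum.swap])
    apply (intro sum.cong refl)
    by (simp add: right_diff_distrib mult.commute flip: ee_add)
  also have "\<dots> = (\<Sum>t<n. \<Sum>h<n. ee n (int \<xi> * (int t * int t - int ((t + h) mod n) * int ((t + h) mod n))))"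
    using assms(1) by (intro sum.cong refl reindex_shift)
  also have "\<dots> = (\<Sum>t<n. \<Sum>h<n. ee n (- (int \<xi> * int h * int h)) * ee n (int t * (- (2 * int \<xi> * int h))))"
  proof (intro sum.cong refl)
    fix t h
    have "ee n (int \<xi> * (int t * int t - int ((t + h) mod n) * int ((t + h) mod n)))
        = ee n (int \<xi> * (int t * int t - int (t + h) * int (t + h)))"
    proof (rule ee_cong[OF assms(1)])
      have "int n dvd int \<xi> * (int (t + h) * int (t + h) - int ((t + h) mod n) * int ((t + h) mod n))"
        using sq_mod_dvd by (rule dvd_mult)
      then show "int n dvd int \<xi> * (int t * int t - int ((t + h) mod n) * int ((t + h) mod n)) -
          int \<xi> * (int t * int t - int (t + h) * int (t + h))"
        by (simp add: algebra_simps)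
    qed
    also have "\<dots> = ee n (- (int \<xi> * int h * int h)) * ee n (int t * (- (2 * int \<xi> * int h)))"
      by (simp add: algebra_simps flip: ee_add)
    finally show "ee n (int \<xi> * (int t * int t - int ((t + h) mod n) * int ((t + h) mod n))) =
        ee n (- (int \<xi> * int h * int h)) * ee n (int t * (- (2 * int \<xi> * int h)))" .
  qed
  also have "\<dots> = (\<Sum>h<n. ee n (- (int \<xi> * int h * int h)) * (\<Sum>t<n. ee n (int t * (- (2 * int \<xi> * int h)))))"
    by (simp add: sum_distrib_left) (rule sum.swap)
  also have "\<dots> = (\<Sum>h<n. ee n (- (int \<xi> * int h * int h)) * (if n dvd 2 * \<xi> * h then of_nat n else 0))"
  proof (intro sum.cong refl)
    fix h
    have "int n dvd (- (2 * int \<xi> * int h)) \<longleftrightarrow> n dvd 2 * \<xi> * h"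
    proof -
      have "2 * int \<xi> * int h = int (2 * \<xi> * h)" by simp
      then show ?thesis by (simp only: dvd_minus_iff int_dvd_int_iff)
    qed
    then show "ee n (- (int \<xi> * int h * int h)) * (\<Sum>t<n. ee n (int t * (- (2 * int \<xi> * int h))))
      = ee n (- (int \<xi> * int h * int h)) * (if n dvd 2 * \<xi> * h then of_nat n else 0)"
      by (simp only: ee_orth[OF assms(1)])
  qed
  finally have eq: "complex_of_real ((cmod (CC n \<xi>))^2) = (\<Sum>h<n. ee n (- (int \<xi> * int h * int h)) * (if n dvd 2 * \<xi> * h then of_nat n else 0))" .
  have "(cmod (CC n \<xi>))^2 = cmod (complex_of_real ((cmod (CC n \<xi>))^2))" by (simp only: norm_of_real abs_power2)
  also have "\<dots> \<le> (\<Sum>h<n. cmod (ee n (- (int \<xi> * int h * int h)) * (if n dvd 2 * \<xi> * h then of_nat n else 0)))"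
    unfolding eq by (rule norm_sum)
  also have "\<dots> = (\<Sum>h<n. if n dvd 2 * \<xi> * h then real n else 0)"
    by (intro sum.cong refl) (simp add: norm_mult)
  also have "\<dots> = real n * real (card {h\<in>{..<n}. n dvd 2 * \<xi> * h})"
    by (simp add: sum.If_cases Int_def)
  also have "\<dots> \<le> real n * (real n / 5)"
    using card_bound[OF assms] by (intro mult_left_mono) auto
  finally show ?thesis by (simp add: power2_eq_square)
qed



lemma sqcount_mod: "sqcount n (t mod n) = sqcount n t"
  unfolding sqcount_def by simp

lemma shift_back: fixes y z n :: nat assumes "y < n" "z < n"
  shows "((y + z) mod n + n - y) mod n = z"
proof (cases "y + z < n")
  case True
  then have "(y + z) mod n = y + z" by simp
  then have "(y + z) mod n + n - y = z + n" by simp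
  then show ?thesis using assms by simp
next
  case False
  then have "(y + z) mod n = y + z - n" using assms by (simp add: le_mod_geq)
  then have "(y + z) mod n + n - y = z" using False by simp
  then show ?thesis using assms by simp
qed

lemma step1: assumes "n > 0"
  shows "(\<Sum>t<n. zconv n u v t * real (sqcount n t))
     = (1 / real n) * (\<Sum>y<n. \<Sum>z<n. u y * v z * real (sqcount n (y + z)))"
proof -
  have "(\<Sum>t<n. zconv n u v t * real (sqcount n t))
      = (1 / real n) * (\<Sum>y<n. u y * (\<Sum>t<n. v ((t + n - y) mod n) * real (sqcount n t)))"
  proof -
    have "(\<Sum>t<n. zconv n u v t * real (sqcount n t))
        = (1 / real n) * (\<Sum>t<n. \<Sum>y<n. u y * (v ((t + n - y) mod n) * real (sqcount n t)))"
      unfolding zconv_def sum_distrib_left sum_distrib_right by (simp only: mult_ac)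
    also have "\<dots> = (1 / real n) * (\<Sum>y<n. \<Sum>t<n. u y * (v ((t + n - y) mod n) * real (sqcount n t)))"
      by (subst sum.swap) (rule refl)
    also have "\<dots> = (1 / real n) * (\<Sum>y<n. u y * (\<Sum>t<n. v ((t + n - y) mod n) * real (sqcount n t)))"
      by (simp only: sum_distrib_left)
    finally show ?thesis .
  qed
  also have "\<dots> = (1 / real n) * (\<Sum>y<n. u y * (\<Sum>z<n. v z * real (sqcount n (y + z))))"
  proof -
    have "(\<Sum>t<n. v ((t + n - y) mod n) * real (sqcount n t)) = (\<Sum>z<n. v z * real (sqcount n (y + z)))"
      if "y < n" for y
    proof -
      have "(\<Sum>t<n. v ((t + n - y) mod n) * real (sqcount n t))
          = (\<Sum>z<n. v (((y + z) mod n + n - y) mod n) * real (sqcount n ((y + z) mod n)))"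
        using assms by (rule reindex_shift)
      also have "\<dots> = (\<Sum>z<n. v z * real (sqcount n (y + z)))"
        using that by (intro sum.cong refl) (simp add: shift_back sqcount_mod)
      finally show ?thesis .
    qed
    then show ?thesis by (intro arg_cong[where f="\<lambda>x. 1 / real n * x"] sum.cong refl) auto
  qed
  also have "\<dots> = (1 / real n) * (\<Sum>y<n. \<Sum>z<n. u y * v z * real (sqcount n (y + z)))"
    by (simp add: sum_distrib_left mult_ac)
  finally show ?thesis .
qed

lemma group24: fixes q :: nat and h :: "nat \<Rightarrow> 'a::comm_monoid_add" shows "(\<Sum>y<q. h y) = (\<Sum>k<24. \<Sum>y\<in>{x. x < q \<and> x mod 24 = k}. h y)"
proof -
  have "(\<Sum>k\<in>{..<24::nat}. sum h {x. x \<in> {..<q} \<and> x mod 24 = k}) = sum h {..<q}"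
    by (rule sum.group) auto
  then show ?thesis by simp
qed

lemma class_sum: assumes "q > 0"
  shows "(\<Sum>y\<in>{x. x < q \<and> x mod 24 = k}. w y) = (real q / 24) * class_avg q w k"
  unfolding class_avg_def using assms by simp

lemma periodic_sum: fixes g :: "nat \<Rightarrow> 'a::comm_monoid_add"
  assumes "\<And>a s. g (a * 24 + s) = g s"
  shows "(\<Sum>s<m * 24. g s) = (\<Sum>i<m. \<Sum>s<24. g s)"
proof -
  have "(\<Sum>s<m * 24. g s) = (\<Sum>i<m. sum g {i * 24..<i * 24 + 24})"
    by (rule sum.nat_group[symmetric])
  also have "\<dots> = (\<Sum>i<m. \<Sum>s<24. g s)"
  proof (rule sum.cong[OF refl])
    fix i assume "i \<in> {..<m}"
    have "sum g {i * 24..<i * 24 + 24} = sum g {0 + i * 24..<24 + i * 24}" by (simp add: add.commute)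
    also have "\<dots> = (\<Sum>s\<in>{0..<24}. g (s + i * 24))" by (rule sum.shift_bounds_nat_ivl)
    also have "\<dots> = (\<Sum>s<24. g s)" using assms by (simp add: add.commute lessThan_atLeast0)
    finally show "sum g {i * 24..<i * 24 + 24} = (\<Sum>s<24. g s)" .
  qed
  finally show ?thesis .
qed



lemma ee_scale: assumes "m > 0" shows "ee (m * 24) (int m * k) = ee 24 k"
  unfolding ee_def using assms by (simp add: field_simps)

lemma FT_mult: assumes "m > 0" shows "FT (m * 24) Y w (m * j) = FT 24 Y w j"
  unfolding FT_def using ee_scale[OF assms] by (simp add: mult.assoc)

lemma FT24_class: assumes "q > 0"
  shows "FT 24 {..<q} w j = FT 24 {..<24} (\<lambda>k. real q / 24 * class_avg q w k) j"
proof -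
  have "FT 24 {..<q} w j = (\<Sum>k<24. \<Sum>y\<in>{x. x < q \<and> x mod 24 = k}. of_real (w y) * ee 24 (int j * int y))"
    unfolding FT_def by (rule group24)
  also have "\<dots> = (\<Sum>k<24. \<Sum>y\<in>{x. x < q \<and> x mod 24 = k}. of_real (w y) * ee 24 (int j * int k))"
  proof (intro sum.cong refl)
    fix k y assume "k \<in> {..<24}" "y \<in> {x. x < q \<and> x mod 24 = k}"
    then have "y mod 24 = k mod 24" by simp
    then have "int 24 dvd int k - int y" by (simp only: nat_mod_eq_iff_dvd)
    then have "int 24 dvd int j * int y - int j * int k"
      by (metis dvd_mult dvd_minus_iff minus_diff_eq right_diff_distrib)
    then show "of_real (w y) * ee 24 (int j * int y) = of_real (w y) * ee 24 (int j * int k)"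
      by (simp add: ee_cong)
  qed
  also have "\<dots> = (\<Sum>k<24. of_real (\<Sum>y\<in>{x. x < q \<and> x mod 24 = k}. w y) * ee 24 (int j * int k))"
    by (simp add: sum_distrib_right)
  also have "\<dots> = FT 24 {..<24} (\<lambda>k. real q / 24 * class_avg q w k) j"
    unfolding FT_def class_sum[OF assms] by simp
  finally show ?thesis .
qed

lemma CC_mult: assumes "m > 0" shows "CC (m * 24) (m * j) = of_nat m * CC 24 j"
proof -
  have "CC (m * 24) (m * j) = (\<Sum>s<m * 24. ee 24 (- (int j * int (s * s))))"
    unfolding CC_def
  proof (rule sum.cong[OF refl])
    fix s
    have "- (int (m * j) * int (s * s)) = int m * (- (int j * int (s * s)))" by simp
    then show "ee (m * 24) (- (int (m * j) * int (s * s))) = ee 24 (- (int j * int (s * s)))"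
      using ee_scale[OF assms, of "- (int j * int (s * s))"] by (simp only:)
  qed
  also have "\<dots> = (\<Sum>i<m. \<Sum>s<24. ee 24 (- (int j * int (s * s))))"
  proof (rule periodic_sum)
    fix a s :: nat
    have "- (int j * int ((a * 24 + s) * (a * 24 + s))) - - (int j * int (s * s)) = 24 * (- (int j * int a * (int a * 24 + 2 * int s)))"
      by (simp add: algebra_simps)
    then show "ee 24 (- (int j * int ((a * 24 + s) * (a * 24 + s)))) = ee 24 (- (int j * int (s * s)))"
      by (intro ee_cong) simp_all
  qed
  also have "\<dots> = of_nat m * CC 24 j" unfolding CC_def by simp
  finally show ?thesis .
qed

lemma split_freq: fixes f :: "nat \<Rightarrow> 'a::comm_monoid_add" assumes "m > 0"
  shows "(\<Sum>\<xi><m * 24. f \<xi>) = (\<Sum>j<24. f (m * j)) + (\<Sum>\<xi>\<in>{\<xi>\<in>{..<m * 24}. \<not> m * 24 dvd 24 * \<xi>}. f \<xi>)"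
proof -
  have M: "{\<xi>\<in>{..<m * 24}. m * 24 dvd 24 * \<xi>} = (\<lambda>j. m * j) ` {..<24}"
  proof (intro set_eqI iffI)
    fix \<xi> assume "\<xi> \<in> {\<xi>\<in>{..<m * 24}. m * 24 dvd 24 * \<xi>}"
    then have "\<xi> < m * 24" "m dvd \<xi>" by (auto simp: mult.commute[of m 24])
    then obtain j where "\<xi> = m * j" by blast
    moreover have "j < 24" using \<open>\<xi> < m * 24\<close> \<open>\<xi> = m * j\<close> assms by simp
    ultimately show "\<xi> \<in> (\<lambda>j. m * j) ` {..<24}" by blast
  qed (auto simp: mult.commute[of m 24] assms)
  have inj: "inj_on (\<lambda>j. m * j) {..<24}" using assms by (simp add: inj_on_def)
  have "(\<Sum>\<xi><m * 24. f \<xi>) = (\<Sum>\<xi>\<in>{\<xi>\<in>{..<m * 24}. m * 24 dvd 24 * \<xi>}. f \<xi>) + (\<Sum>\<xi>\<in>{\<xi>\<in>{..<m * 24}. \<not> m * 24 dvd 24 * \<xi>}. f \<xi>)"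
  proof -
    have "{..<m * 24} = {\<xi>\<in>{..<m * 24}. m * 24 dvd 24 * \<xi>} \<union> {\<xi>\<in>{..<m * 24}. \<not> m * 24 dvd 24 * \<xi>}" by auto
    then have "(\<Sum>\<xi><m * 24. f \<xi>) = sum f ({\<xi>\<in>{..<m * 24}. m * 24 dvd 24 * \<xi>} \<union> {\<xi>\<in>{..<m * 24}. \<not> m * 24 dvd 24 * \<xi>})"
      by (rule arg_cong)
    also have "\<dots> = (\<Sum>\<xi>\<in>{\<xi>\<in>{..<m * 24}. m * 24 dvd 24 * \<xi>}. f \<xi>) + (\<Sum>\<xi>\<in>{\<xi>\<in>{..<m * 24}. \<not> m * 24 dvd 24 * \<xi>}. f \<xi>)"
      by (rule sum.union_disjoint) auto
    finally show ?thesis .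
  qed
  also have "(\<Sum>\<xi>\<in>{\<xi>\<in>{..<m * 24}. m * 24 dvd 24 * \<xi>}. f \<xi>) = (\<Sum>j<24. f (m * j))"
    unfolding M by (simp add: sum.reindex[OF inj])
  finally show ?thesis .
qed



lemma energy: fixes w :: "nat \<Rightarrow> real"
  assumes qm: "q = m * 24" and mpos: "m > 0" and w01: "\<And>x. x < q \<Longrightarrow> 0 \<le> w x \<and> w x \<le> 1"
  shows "(\<Sum>\<xi>\<in>{\<xi>\<in>{..<m * 24}. \<not> m * 24 dvd 24 * \<xi>}. (cmod (FT q {..<q} w \<xi>))^2)
     \<le> (real q)^2 / 24 * (\<Sum>k<24. class_avg q w k - (class_avg q w k)^2)"
proof -
  define R where "R = {\<xi>\<in>{..<m * 24}. \<not> m * 24 dvd 24 * \<xi>}"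
  define a where "a = class_avg q w"
  have qpos: "q > 0" using qm mpos by simp
  have par: "(\<Sum>\<xi><q. (cmod (FT q {..<q} w \<xi>))^2) = real q * (\<Sum>y<q. (w y)^2)"
    by (rule parseval[OF qpos])
  have spl: "(\<Sum>\<xi><q. (cmod (FT q {..<q} w \<xi>))^2)
      = (\<Sum>j<24. (cmod (FT q {..<q} w (m * j)))^2) + (\<Sum>\<xi>\<in>R. (cmod (FT q {..<q} w \<xi>))^2)"
    unfolding R_def qm by (rule split_freq[OF mpos])
  have low: "(\<Sum>j<24. (cmod (FT q {..<q} w (m * j)))^2) = 24 * (\<Sum>k<24. (real q / 24 * a k)^2)"
  proof -
    have "(\<Sum>j<24. (cmod (FT q {..<q} w (m * j)))^2) = (\<Sum>j<24. (cmod (FT 24 {..<24} (\<lambda>k. real q / 24 * a k) j))^2)"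
      unfolding a_def using FT_mult[OF mpos] FT24_class[OF qpos] qm by simp
    also have "\<dots> = 24 * (\<Sum>k<24. (real q / 24 * a k)^2)"
      using parseval[of 24] by simp
    finally show ?thesis .
  qed
  have sq: "(\<Sum>y<q. (w y)^2) \<le> (\<Sum>y<q. w y)"
  proof (rule sum_mono)
    fix y assume "y \<in> {..<q}"
    then have "0 \<le> w y" "w y \<le> 1" using w01 by auto
    then show "(w y)^2 \<le> w y" by (simp add: power2_eq_square mult_le_cancel_right1 mult_left_le)
  qed
  have sw: "(\<Sum>y<q. w y) = (\<Sum>k<24. real q / 24 * a k)"
    unfolding a_def by (simp add: group24[where q=q] class_sum[OF qpos])
  have "(\<Sum>\<xi>\<in>R. (cmod (FT q {..<q} w \<xi>))^2) = real q * (\<Sum>y<q. (w y)^2) - 24 * (\<Sum>k<24. (real q / 24 * a k)^2)"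
    using par spl low by simp
  also have "\<dots> \<le> real q * (\<Sum>k<24. real q / 24 * a k) - 24 * (\<Sum>k<24. (real q / 24 * a k)^2)"
    using sq sw qpos by simp
  also have "\<dots> = (real q)^2 / 24 * (\<Sum>k<24. a k - (a k)^2)"
    by (simp add: sum_distrib_left sum_subtractf power2_eq_square algebra_simps)
  finally show ?thesis unfolding R_def a_def .
qed



lemma main_term: fixes wA wB :: "nat \<Rightarrow> real" assumes qpos: "q > 0"
  shows "(\<Sum>t<24. zconv 24 (class_avg q wA) (class_avg q wB) t * real (sqcount 24 t))
       = 24 / (real q)^2 * (\<Sum>y<q. \<Sum>z<q. wA y * wB z * real (sqcount 24 (y + z)))"
proof -
  define a where "a = class_avg q wA"
  define b where "b = class_avg q wB"
  let ?cls = "\<lambda>k. {x. x < q \<and> x mod 24 = k}"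
  have s1: "(\<Sum>t<24. zconv 24 a b t * real (sqcount 24 t)) = (1 / 24) * (\<Sum>k<24. \<Sum>l<24. a k * b l * real (sqcount 24 (k + l)))"
    using step1[of 24 a b] by simp
  have "(\<Sum>y<q. \<Sum>z<q. wA y * wB z * real (sqcount 24 (y + z)))
      = (\<Sum>k<24. \<Sum>y\<in>?cls k. \<Sum>l<24. \<Sum>z\<in>?cls l. wA y * wB z * real (sqcount 24 (y + z)))"
    by (simp only: group24[where q=q])
  also have "\<dots> = (\<Sum>k<24. \<Sum>y\<in>?cls k. \<Sum>l<24. \<Sum>z\<in>?cls l. wA y * wB z * real (sqcount 24 (k + l)))"
  proof (intro sum.cong refl)
    fix k y l z assume "k \<in> {..<24}" "y \<in> ?cls k" "l \<in> {..<24}" "z \<in> ?cls l"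
    then have yk: "y mod 24 = k" and zl: "z mod 24 = l" by auto
    have "(y + z) mod 24 = (y mod 24 + z mod 24) mod 24" by (simp only: mod_add_eq)
    then have e: "(y + z) mod 24 = (k + l) mod 24" by (simp only: yk zl)
    have "sqcount 24 (y + z) = sqcount 24 ((y + z) mod 24)" by (rule sqcount_mod[symmetric])
    also have "\<dots> = sqcount 24 ((k + l) mod 24)" by (simp only: e)
    also have "\<dots> = sqcount 24 (k + l)" by (rule sqcount_mod)
    finally have "sqcount 24 (y + z) = sqcount 24 (k + l)" .
    then show "wA y * wB z * real (sqcount 24 (y + z)) = wA y * wB z * real (sqcount 24 (k + l))" by simp
  qed
  also have "\<dots> = (\<Sum>k<24. \<Sum>l<24. (\<Sum>y\<in>?cls k. wA y) * (\<Sum>z\<in>?cls l. wB z) * real (sqcount 24 (k + l)))"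
  proof (rule sum.cong[OF refl])
    fix k
    have "(\<Sum>y\<in>?cls k. \<Sum>l<24. \<Sum>z\<in>?cls l. wA y * wB z * real (sqcount 24 (k + l)))
        = (\<Sum>l<24. \<Sum>y\<in>?cls k. \<Sum>z\<in>?cls l. wA y * wB z * real (sqcount 24 (k + l)))"
      by (rule sum.swap)
    also have "\<dots> = (\<Sum>l<24. (\<Sum>y\<in>?cls k. wA y) * (\<Sum>z\<in>?cls l. wB z) * real (sqcount 24 (k + l)))"
      by (simp add: sum_distrib_left sum_distrib_right mult.assoc, intro sum.cong[OF refl], rule sum.swap)
    finally show "(\<Sum>y\<in>?cls k. \<Sum>l<24. \<Sum>z\<in>?cls l. wA y * wB z * real (sqcount 24 (k + l)))
        = (\<Sum>l<24. (\<Sum>y\<in>?cls k. wA y) * (\<Sum>z\<in>?cls l. wB z) * real (sqcount 24 (k + l)))" .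
  qed
  also have "\<dots> = (\<Sum>k<24. \<Sum>l<24. (real q / 24 * a k) * (real q / 24 * b l) * real (sqcount 24 (k + l)))"
    unfolding a_def b_def by (simp only: class_sum[OF qpos])
  also have "\<dots> = (real q)^2 / 24^2 * (\<Sum>k<24. \<Sum>l<24. a k * b l * real (sqcount 24 (k + l)))"
    by (simp add: sum_distrib_left power2_eq_square mult_ac)
  finally have "(\<Sum>y<q. \<Sum>z<q. wA y * wB z * real (sqcount 24 (y + z))) = (real q)^2 / 24^2 * (\<Sum>k<24. \<Sum>l<24. a k * b l * real (sqcount 24 (k + l)))" .
  moreover define S where "S = (\<Sum>k<24. \<Sum>l<24. a k * b l * real (sqcount 24 (k + l)))"
  moreover define P where "P = (\<Sum>y<q. \<Sum>z<q. wA y * wB z * real (sqcount 24 (y + z)))"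
  moreover define X where "X = (\<Sum>t<24. zconv 24 a b t * real (sqcount 24 t))"
  ultimately have hP: "P = (real q)^2 / 24^2 * S" and hX: "X = 1 / 24 * S" using s1 by simp_all
  have "X = 24 / (real q)^2 * P" unfolding hP hX using qpos by (simp add: field_simps)
  then show ?thesis unfolding X_def P_def a_def b_def .
qed



theorem mainTheorem7:
  fixes q :: nat and wA wB :: "nat \<Rightarrow> real"
  assumes "q > 0" and "24 dvd q"
    and "\<And>x. x < q \<Longrightarrow> 0 \<le> wA x \<and> wA x \<le> 1"
    and "\<And>x. x < q \<Longrightarrow> 0 \<le> wB x \<and> wB x \<le> 1"
  shows "(24 / real q) * (\<Sum>t<q. zconv q wA wB t * real (sqcount q t))
     \<ge> (\<Sum>t<24. zconv 24 (class_avg q wA) (class_avg q wB) t * real (sqcount 24 t))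
       - (1 / sqrt 5) * sqrt (\<Sum>k<24. class_avg q wA k - (class_avg q wA k)^2)
                     * sqrt (\<Sum>k<24. class_avg q wB k - (class_avg q wB k)^2)"
proof -
  obtain m where qm: "q = m * 24" using assms(2) by (auto simp: dvd_def mult.commute)
  have mpos: "m > 0" using assms(1) qm by simp
  define R where "R = {\<xi>\<in>{..<m * 24}. \<not> m * 24 dvd 24 * \<xi>}"
  define A where "A = FT q {..<q} wA"
  define B where "B = FT q {..<q} wB"
  define PA where "PA = (\<Sum>y<q. \<Sum>z<q. wA y * wB z * real (sqcount q (y + z)))"
  define PB where "PB = (\<Sum>y<q. \<Sum>z<q. wA y * wB z * real (sqcount 24 (y + z)))"
  define SA where "SA = (\<Sum>k<24. class_avg q wA k - (class_avg q wA k)^2)"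
  define SB where "SB = (\<Sum>k<24. class_avg q wB k - (class_avg q wB k)^2)"
  define S24 where "S24 = (\<Sum>j<24. FT 24 {..<q} wA j * FT 24 {..<q} wB j * CC 24 j)"
  define Z where "Z = (\<Sum>\<xi>\<in>R. A \<xi> * B \<xi> * CC q \<xi>)"
  have qpos: "real q > 0" using assms(1) by simp
  have L: "(24 / real q) * (\<Sum>t<q. zconv q wA wB t * real (sqcount q t)) = 24 / (real q)^2 * PA"
    unfolding PA_def step1[OF assms(1)] by (simp add: power2_eq_square)
  have M: "(\<Sum>t<24. zconv 24 (class_avg q wA) (class_avg q wB) t * real (sqcount 24 t)) = 24 / (real q)^2 * PB"
    unfolding PB_def by (rule main_term[OF assms(1)])
  have fA: "complex_of_real PA = (1 / of_nat q) * (\<Sum>\<xi><q. A \<xi> * B \<xi> * CC q \<xi>)"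
    unfolding PA_def A_def B_def by (rule BF[OF assms(1)]) simp
  have fB: "complex_of_real PB = (1 / of_nat 24) * S24"
    unfolding PB_def S24_def by (rule BF) simp_all
  have spl: "(\<Sum>\<xi><q. A \<xi> * B \<xi> * CC q \<xi>) = (\<Sum>j<24. A (m * j) * B (m * j) * CC q (m * j)) + Z"
    unfolding Z_def R_def qm by (rule split_freq[OF mpos])
  have low: "(\<Sum>j<24. A (m * j) * B (m * j) * CC q (m * j)) = of_nat m * S24"
    unfolding A_def B_def S24_def qm FT_mult[OF mpos] CC_mult[OF mpos] by (simp add: sum_distrib_left mult_ac)
  have mq: "(1 / of_nat q) * of_nat m = (1 / 24 :: complex)" using qm mpos by simp
  have diff: "complex_of_real (PA - PB) = (1 / of_nat q) * Z"
  proof -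
    have "complex_of_real (PA - PB) = (1 / of_nat q) * (of_nat m * S24 + Z) - (1 / of_nat 24) * S24"
      using fA fB spl low by simp
    also have "\<dots> = ((1 / of_nat q) * of_nat m) * S24 + (1 / of_nat q) * Z - (1 / 24) * S24"
      by (simp add: algebra_simps)
    also have "\<dots> = (1 / of_nat q) * Z" unfolding mq by simp
    finally show ?thesis .
  qed
  have Cb: "cmod (CC q \<xi>) \<le> real q / sqrt 5" if "\<xi> \<in> R" for \<xi>
  proof -
    have "\<not> q dvd 24 * \<xi>" using that unfolding R_def qm by simp
    then have "(cmod (CC q \<xi>))^2 \<le> real q ^ 2 / 5" by (rule gauss[OF assms(1)])
    then have "cmod (CC q \<xi>) \<le> sqrt (real q ^ 2 / 5)" by (rule real_le_rsqrt)
    also have "\<dots> = real q / sqrt 5" by (simp add: real_sqrt_divide)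
    finally show ?thesis .
  qed
  let ?LA = "L2_set (\<lambda>\<xi>. cmod (A \<xi>)) R"
  let ?LB = "L2_set (\<lambda>\<xi>. cmod (B \<xi>)) R"
  have bound: "\<bar>PA - PB\<bar> \<le> 1 / sqrt 5 * (?LA * ?LB)"
  proof -
    have "\<bar>PA - PB\<bar> = cmod (complex_of_real (PA - PB))" by (simp only: norm_of_real)
    also have "\<dots> = (1 / real q) * cmod Z" unfolding diff by (simp add: norm_mult norm_divide)
    also have "\<dots> \<le> (1 / real q) * (\<Sum>\<xi>\<in>R. cmod (A \<xi>) * cmod (B \<xi>) * cmod (CC q \<xi>))"
      unfolding Z_def using qpos
      by (intro mult_left_mono order.trans[OF norm_sum]) (simp_all add: norm_mult)
    also have "\<dots> \<le> (1 / real q) * (\<Sum>\<xi>\<in>R. cmod (A \<xi>) * cmod (B \<xi>) * (real q / sqrt 5))"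
      using Cb qpos by (intro mult_left_mono sum_mono mult_left_mono) auto
    also have "\<dots> = 1 / sqrt 5 * (\<Sum>\<xi>\<in>R. \<bar>cmod (A \<xi>)\<bar> * \<bar>cmod (B \<xi>)\<bar>)"
      using qpos by (simp add: sum_distrib_left sum_distrib_right)
    also have "\<dots> \<le> 1 / sqrt 5 * (?LA * ?LB)"
      by (intro mult_left_mono L2_set_mult_ineq) simp
    finally show ?thesis .
  qed
  have eA: "?LA \<le> sqrt ((real q)^2 / 24 * SA)"
    unfolding L2_set_def SA_def A_def R_def
    by (rule real_sqrt_le_mono, rule energy[OF qm mpos]) (use assms(3) in auto)
  have eB: "?LB \<le> sqrt ((real q)^2 / 24 * SB)"
    unfolding L2_set_def SB_def B_def R_def
    by (rule real_sqrt_le_mono, rule energy[OF qm mpos]) (use assms(4) in auto)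
  have prod: "?LA * ?LB \<le> sqrt ((real q)^2 / 24 * SA) * sqrt ((real q)^2 / 24 * SB)"
  proof (rule mult_mono[OF eA eB])
    show "0 \<le> sqrt ((real q)^2 / 24 * SA)" by (rule order.trans[OF L2_set_nonneg eA])
    show "0 \<le> ?LB" by (rule L2_set_nonneg)
  qed
  have sq: "sqrt ((real q)^2 / 24 * SA) * sqrt ((real q)^2 / 24 * SB) = (real q)^2 / 24 * (sqrt SA * sqrt SB)"
  proof -
    have "sqrt ((real q)^2 / 24 * SA) * sqrt ((real q)^2 / 24 * SB) = (sqrt ((real q)^2 / 24))^2 * (sqrt SA * sqrt SB)"
      unfolding real_sqrt_mult[of "(real q)^2 / 24" SA] real_sqrt_mult[of "(real q)^2 / 24" SB]
      by (simp only: power2_eq_square mult_ac)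
    also have "(sqrt ((real q)^2 / 24))^2 = (real q)^2 / 24" by simp
    finally show ?thesis .
  qed
  have fin: "24 / (real q)^2 * \<bar>PA - PB\<bar> \<le> 1 / sqrt 5 * (sqrt SA * sqrt SB)"
  proof -
    have "24 / (real q)^2 * \<bar>PA - PB\<bar> \<le> 24 / (real q)^2 * (1 / sqrt 5 * ((real q)^2 / 24 * (sqrt SA * sqrt SB)))"
    proof (rule mult_left_mono)
      have "\<bar>PA - PB\<bar> \<le> 1 / sqrt 5 * (?LA * ?LB)" by (rule bound)
      also have "\<dots> \<le> 1 / sqrt 5 * (sqrt ((real q)^2 / 24 * SA) * sqrt ((real q)^2 / 24 * SB))"
        by (rule mult_left_mono[OF prod]) simp
      finally show "\<bar>PA - PB\<bar> \<le> 1 / sqrt 5 * ((real q)^2 / 24 * (sqrt SA * sqrt SB))" unfolding sq .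
    qed simp
    also have "\<dots> = 1 / sqrt 5 * (sqrt SA * sqrt SB)" using qpos by (simp add: field_simps)
    finally show ?thesis .
  qed
  have "24 / (real q)^2 * PB - 24 / (real q)^2 * \<bar>PA - PB\<bar> \<le> 24 / (real q)^2 * PA"
  proof -
    have "PB - \<bar>PA - PB\<bar> \<le> PA" by linarith
    then have "24 / (real q)^2 * (PB - \<bar>PA - PB\<bar>) \<le> 24 / (real q)^2 * PA"
      by (rule mult_left_mono) simp
    then show ?thesis by (simp add: right_diff_distrib)
  qed
  then show ?thesis unfolding L M SA_def[symmetric] SB_def[symmetric] using fin by (simp add: mult.assoc)
qed


end
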